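(* Let $n,m\ge 3$ and let $G=P_n\square P_m$ be the grid graph. Let $(x_1,y_1),\dots,(x_k,y_k)$ be vertices and $(p,q)$ another vertex such that either $p<x_i$ for all $i\in\{1,\dots,k\}$ or $p>x_i$ for all $i\in\{1,\dots,k\}$, and either $q<y_i$ for all $i\in\{1,\dots,k\}$ or $q>y_i$ for all $i\in\{1,\dots,k\}$. Then there exist two neighbours of $(p,q)$, of the form $(p^*,q)$ and $(p,q^* )$, that are not resolved by any of the vertices $(p,q),(x_1,y_1),\dots,(x_k,y_k)$.
   Context: The grid graph $P_n\square P_m$ has vertex set $\{(i,j):0\le i\le n-1,\ 0\le j\le m-1\}$, with $(i,j)$ adjacent to $(k,l)$ iff $|i-k|+|j-l|=1$; distance $d((i,j),(k,l))=|i-k|+|j-l|$. A vertex $w$ resolves $x,y$ if $d(w,x)\ne d(w,y)$. *)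

theory Defs
  imports Main
begin

definition grid_vertex :: "nat \<Rightarrow> nat \<Rightarrow> nat \<times> nat \<Rightarrow> bool" where
  "grid_vertex n m v \<longleftrightarrow> fst v < n \<and> snd v < m"

definition grid_dist :: "nat \<times> nat \<Rightarrow> nat \<times> nat \<Rightarrow> nat" where
  "grid_dist v w = nat \<bar>int (fst v) - int (fst w)\<bar> + nat \<bar>int (snd v) - int (snd w)\<bar>"

definition grid_adj :: "nat \<Rightarrow> nat \<Rightarrow> nat \<times> nat \<Rightarrow> nat \<times> nat \<Rightarrow> bool" where
  "grid_adj n m v w \<longleftrightarrow> grid_vertex n m v \<and> grid_vertex n m w \<and> grid_dist v w = 1"

definition resolves :: "nat \<times> nat \<Rightarrow> nat \<times> nat \<Rightarrow> nat \<times> nat \<Rightarrow> bool" where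
  "resolves w a b \<longleftrightarrow> grid_dist w a \<noteq> grid_dist w b"

end

theory Submission
  imports Defs
begin

theorem lemma2:
  fixes n m k p q :: nat and x y :: "nat \<Rightarrow> nat"
  assumes "n \<ge> 3" and "m \<ge> 3"
    and "\<forall>i\<in>{1..k}. grid_vertex n m (x i, y i)"
    and "grid_vertex n m (p, q)"
    and "(\<forall>i\<in>{1..k}. p < x i) \<or> (\<forall>i\<in>{1..k}. p > x i)"
    and "(\<forall>i\<in>{1..k}. q < y i) \<or> (\<forall>i\<in>{1..k}. q > y i)"
  shows "\<exists>p' q'. grid_adj n m (p, q) (p', q) \<and> grid_adj n m (p, q) (p, q') \<and>
           (\<forall>w \<in> insert (p, q) ((\<lambda>i. (x i, y i)) ` {1..k}). \<not> resolves w (p', q) (p, q'))"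
proof -
  define p' where "p' = (if p+1<n \<and> (\<forall>i\<in>{1..k}. p < x i) then p+1 else p-1)"
  define q' where "q' = (if q+1<m \<and> (\<forall>i\<in>{1..k}. q < y i) then q+1 else q-1)"
  have X: "(p' = p+1 \<and> p+1 < n \<and> (\<forall>i\<in>{1..k}. p < x i)) \<or> (p' + 1 = p \<and> (\<forall>i\<in>{1..k}. p > x i))"
  proof (cases "p+1<n \<and> (\<forall>i\<in>{1..k}. p < x i)")
    case True then show ?thesis by (simp add: p'_def)
  next
    case False
    have "\<forall>i\<in>{1..k}. p > x i"
    proof (cases "p+1<n")
      case True then show ?thesis using False assms(5) by auto
    next
      case F2: False
      show ?thesis
      proof
        fix i assume i: "i \<in> {1..k}"
        then have "x i < n" using assms(3) by (auto simp: grid_vertex_def)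
        then show "x i < p" using assms(5) F2 i by force
      qed
    qed
    moreover have "p \<ge> 1"
    proof (cases "p+1<n")
      case True then obtain i where "i\<in>{1..k}" using False by auto
      then show ?thesis using calculation by fastforce
    next
      case False then show ?thesis using assms(1) by linarith
    qed
    ultimately show ?thesis using False by (simp add: p'_def)
  qed
  have Y: "(q' = q+1 \<and> q+1 < m \<and> (\<forall>i\<in>{1..k}. q < y i)) \<or> (q' + 1 = q \<and> (\<forall>i\<in>{1..k}. q > y i))"
  proof (cases "q+1<m \<and> (\<forall>i\<in>{1..k}. q < y i)")
    case True then show ?thesis by (simp add: q'_def)
  next
    case False
    have "\<forall>i\<in>{1..k}. q > y i"
    proof (cases "q+1<m")
      case True then show ?thesis using False assms(6) by auto
    next
      case F2: False
      show ?thesis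
      proof
        fix i assume i: "i \<in> {1..k}"
        then have "y i < m" using assms(3) by (auto simp: grid_vertex_def)
        then show "y i < q" using assms(6) F2 i by force
      qed
    qed
    moreover have "q \<ge> 1"
    proof (cases "q+1<m")
      case True then obtain i where "i\<in>{1..k}" using False by auto
      then show ?thesis using calculation by fastforce
    next
      case False then show ?thesis using assms(2) by linarith
    qed
    ultimately show ?thesis using False by (simp add: q'_def)
  qed
  have A1: "grid_adj n m (p, q) (p', q)" using X assms(4)
    by (auto simp: grid_adj_def grid_vertex_def grid_dist_def)
  have A2: "grid_adj n m (p, q) (p, q')" using Y assms(4)
    by (auto simp: grid_adj_def grid_vertex_def grid_dist_def)
  have R: "\<forall>w \<in> insert (p, q) ((\<lambda>i. (x i, y i)) ` {1..k}). \<not> resolves w (p', q) (p, q')"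
  proof
    fix w assume "w \<in> insert (p, q) ((\<lambda>i. (x i, y i)) ` {1..k})"
    then consider "w = (p,q)" | i where "i \<in> {1..k}" "w = (x i, y i)" by auto
    then show "\<not> resolves w (p', q) (p, q')"
    proof cases
      case 1 then show ?thesis using X Y by (auto simp: resolves_def grid_dist_def)
    next
      case 2
      have "p < x i \<and> p' = p+1 \<or> x i < p \<and> p' + 1 = p" using X 2 by auto
      moreover have "q < y i \<and> q' = q+1 \<or> y i < q \<and> q' + 1 = q" using Y 2 by auto
      ultimately show ?thesis using 2 by (auto simp: resolves_def grid_dist_def)
    qed
  qed
  show ?thesis using A1 A2 R by blast
qed

end
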